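(* Consider the geometric Brownian motion storage model $dX_0=-\mu X_0\,dt+\sigma X_0\,dW$ on $\mathcal E=(0,\infty)$ with $\mu,\sigma>0$, holding cost $c_0(x)=k_3x$ ($k_3>0$), and any ordering cost $c_1:\{(y,z):0<y\le z\}\to[0,\infty]$ that is continuous, satisfies $c_1\ge k_1>0$, has $c_1(\cdot,z)$ continuously differentiable near $0$ for each $z$ and $c_1(y,\cdot)$ continuously differentiable near $\infty$ for each $y$, and for which $\lim_{y\to0}c_1(y,z)<\infty$ for some $z>0$. Then $\inf\{F_0(y,z):0<y\le z\}=0$ and there is no pair $0<y<z$ minimizing $F_0$; that is, no $(y,z)$ ordering policy attains the infimal $(s,S)$ cost.
   Context: $W$ is a standard Brownian motion, $x_0>0$. Scale density $s(x)=x^{2\mu/\sigma^2}$ and speed density $m(x)=\sigma^{-2}x^{-2-2\mu/\sigma^2}$, with scale measure $dS=s\,dx$ and speed measure $dM=m\,dx$. Define $g_0(x)=\int_{x_0}^x\int_u^\infty2c_0(v)\,dM(v)\,dS(u)$, $\zeta(x)=\int_{x_0}^x2M[u,\infty)\,dS(u)$, and $F_0(y,z)=\frac{c_1(y,z)+g_0(z)-g_0(y)}{\zeta(z)-\zeta(y)}$ for $0<y<z$, $F_0(y,y)=\infty$. For the $(y,z)$ ordering policy (order up to $z$ whenever the level falls to $y$), $F_0(y,z)$ is its long-term average cost. *)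

theory Defs
  imports "HOL-Analysis.Analysis"
begin

text \<open>Geometric Brownian motion dX = -mu X dt + sigma X dW on (0,inf).\<close>

definition scale_dens :: "real \<Rightarrow> real \<Rightarrow> real \<Rightarrow> real" where
  "scale_dens mu sig x = x powr (2 * mu / sig\<^sup>2)"

definition speed_dens :: "real \<Rightarrow> real \<Rightarrow> real \<Rightarrow> real" where
  "speed_dens mu sig x = (1 / sig\<^sup>2) * x powr (-2 - 2 * mu / sig\<^sup>2)"

definition g0 :: "real \<Rightarrow> real \<Rightarrow> (real \<Rightarrow> real) \<Rightarrow> real \<Rightarrow> real \<Rightarrow> real" where
  "g0 mu sig c0 x0 x =
     (LBINT u = ereal x0..ereal x.
        (LBINT v = ereal u..\<infinity>. 2 * c0 v * speed_dens mu sig v) * scale_dens mu sig u)"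

definition zeta :: "real \<Rightarrow> real \<Rightarrow> real \<Rightarrow> real \<Rightarrow> real" where
  "zeta mu sig x0 x =
     (LBINT u = ereal x0..ereal x.
        2 * (LBINT v = ereal u..\<infinity>. speed_dens mu sig v) * scale_dens mu sig u)"

text \<open>Long-term average cost of the (y,z) ordering policy; ordering cost c1 may be +inf.\<close>
definition F0 :: "real \<Rightarrow> real \<Rightarrow> (real \<Rightarrow> real) \<Rightarrow> (real \<Rightarrow> real \<Rightarrow> ereal) \<Rightarrow> real
                   \<Rightarrow> real \<Rightarrow> real \<Rightarrow> ereal" where
  "F0 mu sig c0 c1 x0 y z =
     (if y < z then (c1 y z + ereal (g0 mu sig c0 x0 z - g0 mu sig c0 x0 y))
                      / ereal (zeta mu sig x0 z - zeta mu sig x0 y)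
      else \<infinity>)"

definition C1_near_zero :: "(real \<Rightarrow> ereal) \<Rightarrow> real \<Rightarrow> bool" where
  "C1_near_zero f z \<longleftrightarrow> (\<exists>\<delta>>0. \<exists>d. 
      (\<forall>y\<in>{0<..<\<delta>} \<inter> {0<..z}. f y \<noteq> \<infinity> \<and> f y \<noteq> -\<infinity> \<and>
          ((\<lambda>t. real_of_ereal (f t)) has_real_derivative d y) (at y within {0<..z}))
      \<and> continuous_on ({0<..<\<delta>} \<inter> {0<..z}) d)"

definition C1_near_infty :: "(real \<Rightarrow> ereal) \<Rightarrow> real \<Rightarrow> bool" where
  "C1_near_infty f y \<longleftrightarrow> (\<exists>N. \<exists>d.
      (\<forall>z\<in>{N<..} \<inter> {y..}. f z \<noteq> \<infinity> \<and> f z \<noteq> -\<infinity> \<and>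
          ((\<lambda>t. real_of_ereal (f t)) has_real_derivative d z) (at z within {y..}))
      \<and> continuous_on ({N<..} \<inter> {y..}) d)"

end

theory Submission
  imports Defs
begin

lemma tail_powr:
  fixes u q :: real assumes u: "u > 0" and q: "q > 0"
  shows "(LBINT v = ereal u..\<infinity>. v powr (-1-q)) = u powr (-q) / q"
proof -
  define F where "F = (\<lambda>v::real. - (v powr (-q)) / q)"
  have "(LBINT v = ereal u..\<infinity>. v powr (-1-q)) = 0 - F u"
  proof (rule interval_integral_FTC_nonneg)
    show "ereal u < \<infinity>" by simp
    fix x assume x: "ereal u < ereal x" "ereal x < \<infinity>"
    hence xp: "x > 0" using u by simp
    show "DERIV F x :> x powr (-1-q)"
    proof -
      have e: "-q-1 = -1-q" by simp
      show ?thesis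
      unfolding F_def using has_real_derivative_powr[OF xp, of "-q"] q xp
      by (auto intro!: derivative_eq_intros simp: e)
    qed
    show "isCont (\<lambda>v. v powr (-1-q)) x" using xp by (auto intro!: continuous_intros)
  next
    show "AE x in lborel. ereal u < ereal x \<longrightarrow> ereal x < \<infinity> \<longrightarrow> 0 \<le> x powr (-1-q)" by simp
    show "((F \<circ> real_of_ereal) \<longlongrightarrow> F u) (at_right (ereal u))"
    proof -
      have "isCont F u" unfolding F_def using u q by (intro continuous_intros) auto
      hence "(F \<longlongrightarrow> F u) (at u within UNIV)" by (simp add: isCont_def)
      hence "(F \<longlongrightarrow> F u) (at_right u)" by (rule tendsto_within_subset) simp
      thus ?thesis unfolding ereal_tendsto_simps1 .
    qed
    have "((\<lambda>v::real. v powr (-q)) \<longlongrightarrow> 0) at_top"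
      using q by (intro tendsto_neg_powr filterlim_ident) auto
    hence "((\<lambda>v::real. - (v powr (-q)) / q) \<longlongrightarrow> - 0 / q) at_top"
      by (intro tendsto_divide tendsto_minus tendsto_const) (use q in auto)
    then show "((F \<circ> real_of_ereal) \<longlongrightarrow> 0) (at_left \<infinity>)"
      unfolding ereal_tendsto_simps1 F_def by simp
  qed
  thus ?thesis by (simp add: F_def)
qed

lemma const_int:
  fixes a b c :: real
  shows "(LBINT u = ereal a..ereal b. c) = c * (b - a)"
proof -
  have "(LBINT u = ereal a..ereal b. c) = (\<lambda>u. c * u) b - (\<lambda>u. c * u) a"
    by (rule interval_integral_FTC_finite)
       (auto intro!: derivative_eq_intros continuous_intros simp: has_real_derivative_iff_has_vector_derivative[symmetric])
  thus ?thesis by (simp add: algebra_simps)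
qed

lemma inv_int:
  fixes a b c :: real assumes a: "a > 0" and b: "b > 0"
  shows "(LBINT u = ereal a..ereal b. c / u) = c * (ln b - ln a)"
proof -
  have "(LBINT u = ereal a..ereal b. c / u) = (\<lambda>u. c * ln u) b - (\<lambda>u. c * ln u) a"
  proof (rule interval_integral_FTC_finite)
    show "continuous_on {min a b..max a b} (\<lambda>u. c / u)" using a b
      by (intro continuous_intros) auto
    fix x assume "min a b \<le> x" "x \<le> max a b"
    hence "x > 0" using a b by linarith
    thus "((\<lambda>u. c * ln u) has_vector_derivative c / x) (at x within {min a b..max a b})"
      by (auto intro!: derivative_eq_intros simp: has_real_derivative_iff_has_vector_derivative[symmetric])
  qed
  thus ?thesis by (simp add: algebra_simps)
qed

lemma g0_closed:
  fixes mu sig k3 x0 x :: real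
  assumes mu: "mu > 0" and sig: "sig > 0" and x0: "x0 > 0" and x: "x > 0"
  shows "g0 mu sig (\<lambda>x. k3 * x) x0 x = k3 / mu * (x - x0)"
proof -
  define a where "a = 2 * mu / sig\<^sup>2"
  have ap: "a > 0" unfolding a_def using mu sig by simp
  have inner: "(LBINT v = ereal u..\<infinity>. 2 * (k3 * v) * speed_dens mu sig v) = 2*k3/sig\<^sup>2 * (u powr (-a) / a)"
    if u: "u > 0" for u
  proof -
    have "(LBINT v = ereal u..\<infinity>. 2 * (k3 * v) * speed_dens mu sig v)
        = (LBINT v = ereal u..\<infinity>. 2*k3/sig\<^sup>2 * v powr (-1-a))"
    proof (rule interval_integral_cong)
      fix v assume "v \<in> einterval (min (ereal u) \<infinity>) (max (ereal u) \<infinity>)"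
      hence v: "v > 0" using u by (simp add: einterval_iff)
      have e: "-1-a = 1 + (-2-a)" by simp
      have "v powr (-1-a) = v powr 1 * v powr (-2-a)"
        by (simp only: e powr_add)
      thus "2 * (k3 * v) * speed_dens mu sig v = 2*k3/sig\<^sup>2 * v powr (-1-a)"
        using v unfolding speed_dens_def a_def by simp
    qed
    also have "\<dots> = 2*k3/sig\<^sup>2 * (u powr (-a) / a)"
      using tail_powr[OF u ap] by simp
    finally show ?thesis .
  qed
  have "g0 mu sig (\<lambda>x. k3 * x) x0 x = (LBINT u = ereal x0..ereal x. k3 / mu)"
    unfolding g0_def
  proof (rule interval_integral_cong)
    fix u assume "u \<in> einterval (min (ereal x0) (ereal x)) (max (ereal x0) (ereal x))"
    hence u: "u > 0" using x0 x by (auto simp: einterval_iff min_def split: if_splits)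
    have "u powr (-a) * u powr a = 1" using u by (simp add: powr_add[symmetric])
    hence "2*k3/sig\<^sup>2 * (u powr (-a) / a) * u powr a = 2*k3/(sig\<^sup>2 * a)"
      by (simp add: field_simps)
    also have "\<dots> = k3 / mu" unfolding a_def using sig mu by (simp add: field_simps)
    finally show "(LBINT v = ereal u..\<infinity>. 2 * (k3 * v) * speed_dens mu sig v) * scale_dens mu sig u = k3 / mu"
      using inner[OF u] unfolding scale_dens_def a_def by simp
  qed
  also have "\<dots> = k3 / mu * (x - x0)" by (rule const_int)
  finally show ?thesis .
qed

lemma zeta_closed:
  fixes mu sig x0 x :: real
  assumes mu: "mu > 0" and sig: "sig > 0" and x0: "x0 > 0" and x: "x > 0"
  shows "zeta mu sig x0 x = 2 / (sig\<^sup>2 + 2 * mu) * (ln x - ln x0)"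
proof -
  define a where "a = 2 * mu / sig\<^sup>2"
  have "a > 0" unfolding a_def using mu sig by simp
  hence ap: "1 + a > 0" by simp
  have inner: "(LBINT v = ereal u..\<infinity>. speed_dens mu sig v) = 1/sig\<^sup>2 * (u powr (-(1+a)) / (1+a))"
    if u: "u > 0" for u
  proof -
    have "(LBINT v = ereal u..\<infinity>. speed_dens mu sig v)
        = (LBINT v = ereal u..\<infinity>. 1/sig\<^sup>2 * v powr (-1-(1+a)))"
    proof (rule interval_integral_cong)
      fix v assume "v \<in> einterval (min (ereal u) \<infinity>) (max (ereal u) \<infinity>)"
      have e: "-1-(1+a) = -2 - 2 * mu / sig\<^sup>2" unfolding a_def by simp
      show "speed_dens mu sig v = 1/sig\<^sup>2 * v powr (-1-(1+a))"
        unfolding speed_dens_def e by simp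
    qed
    also have "\<dots> = 1/sig\<^sup>2 * (u powr (-(1+a)) / (1+a))"
      using tail_powr[OF u ap] by simp
    finally show ?thesis .
  qed
  have "zeta mu sig x0 x = (LBINT u = ereal x0..ereal x. (2 / (sig\<^sup>2 + 2 * mu)) / u)"
    unfolding zeta_def
  proof (rule interval_integral_cong)
    fix u assume "u \<in> einterval (min (ereal x0) (ereal x)) (max (ereal x0) (ereal x))"
    hence u: "u > 0" using x0 x by (auto simp: einterval_iff min_def split: if_splits)
    have "u powr (-(1+a)) * u powr a = u powr (-1)" using u by (simp add: powr_add[symmetric])
    also have "\<dots> = 1 / u" using u by (simp add: powr_minus_divide)
    finally have pw: "u powr (-(1+a)) * u powr a = 1 / u" .
    have "2 * (1/sig\<^sup>2 * (u powr (-(1+a)) / (1+a))) * u powr a = 2 / (sig\<^sup>2 * (1+a)) * (u powr (-(1+a)) * u powr a)"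
      using ap sig by (simp add: field_simps)
    also have "\<dots> = (2 / (sig\<^sup>2 + 2 * mu)) / u"
    proof -
      have "sig\<^sup>2 * (1+a) = sig\<^sup>2 + 2 * mu" unfolding a_def using sig by (simp add: field_simps)
      thus ?thesis unfolding pw by simp
    qed
    finally show "2 * (LBINT v = ereal u..\<infinity>. speed_dens mu sig v) * scale_dens mu sig u = (2 / (sig\<^sup>2 + 2 * mu)) / u"
      using inner[OF u] unfolding scale_dens_def a_def by simp
  qed
  also have "\<dots> = 2 / (sig\<^sup>2 + 2 * mu) * (ln x - ln x0)" by (rule inv_int[OF x0 x])
  finally show ?thesis .
qed

lemma F0_closed:
  fixes mu sig k3 x0 y z :: real
  assumes mu: "mu > 0" and sig: "sig > 0" and x0: "x0 > 0" and y: "y > 0" and yz: "y < z"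
  shows "F0 mu sig (\<lambda>x. k3 * x) c1 x0 y z =
     (c1 y z + ereal (k3 / mu * (z - y))) / ereal (2 / (sig\<^sup>2 + 2 * mu) * (ln z - ln y))"
proof -
  have z: "z > 0" using y yz by simp
  have "g0 mu sig (\<lambda>x. k3 * x) x0 z - g0 mu sig (\<lambda>x. k3 * x) x0 y = k3 / mu * (z - y)"
    using g0_closed[OF mu sig x0 z, of k3] g0_closed[OF mu sig x0 y, of k3] by (simp add: diff_divide_distrib right_diff_distrib)
  moreover have "zeta mu sig x0 z - zeta mu sig x0 y = 2 / (sig\<^sup>2 + 2 * mu) * (ln z - ln y)"
    using zeta_closed[OF mu sig x0 z] zeta_closed[OF mu sig x0 y] by (simp add: right_diff_distrib)
  ultimately show ?thesis unfolding F0_def using yz by simp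
qed

lemma F0_pos:
  fixes mu sig k1 k3 x0 y z :: real
  assumes mu: "mu > 0" and sig: "sig > 0" and x0: "x0 > 0" and y: "y > 0" and yz: "y \<le> z"
    and k3: "k3 > 0" and k1: "k1 > 0"
    and c1_lb: "\<And>y z. 0 < y \<Longrightarrow> y \<le> z \<Longrightarrow> ereal k1 \<le> c1 y z"
  shows "F0 mu sig (\<lambda>x. k3 * x) c1 x0 y z > 0"
proof (cases "y < z")
  case False thus ?thesis unfolding F0_def by simp
next
  case True
  define D where "D = 2 / (sig\<^sup>2 + 2 * mu) * (ln z - ln y)"
  have "ln y < ln z" using True y by simp
  hence Dp: "D > 0" unfolding D_def using sig mu by (simp add: add_pos_pos)
  define N where "N = c1 y z + ereal (k3 / mu * (z - y))"
  have "ereal (k3 / mu * (z - y)) \<ge> 0" using k3 mu True by simp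
  hence Nk: "ereal k1 \<le> N" unfolding N_def using c1_lb[OF y yz]
    by (metis add.right_neutral add_mono)
  have "N / ereal D > 0"
  proof (cases N)
    case (real r) thus ?thesis using Nk k1 Dp by simp
  next
    case PInf thus ?thesis using Dp by simp
  next
    case MInf thus ?thesis using Nk by simp
  qed
  thus ?thesis using F0_closed[OF mu sig x0 y True] unfolding N_def D_def by simp
qed

theorem theorem6p7:
  fixes mu sig k1 k3 x0 :: real and c1 :: "real \<Rightarrow> real \<Rightarrow> ereal"
  assumes mu: "mu > 0" and sig: "sig > 0" and k3: "k3 > 0" and x0: "x0 > 0"
    and k1: "k1 > 0"
    and c1_cont: "continuous_on {(y, z). 0 < y \<and> y \<le> z} (\<lambda>(y, z). c1 y z)"
    and c1_lb: "\<And>y z. 0 < y \<Longrightarrow> y \<le> z \<Longrightarrow> ereal k1 \<le> c1 y z"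
    and c1_zero: "\<And>z. 0 < z \<Longrightarrow> C1_near_zero (\<lambda>y. c1 y z) z"
    and c1_infty: "\<And>y. 0 < y \<Longrightarrow> C1_near_infty (\<lambda>z. c1 y z) y"
    and c1_lim: "\<exists>z>0. \<exists>L::real. ((\<lambda>y. c1 y z) \<longlongrightarrow> ereal L) (at_right 0)"
  shows "(INF p \<in> {(y, z). 0 < y \<and> y \<le> z}.
            F0 mu sig (\<lambda>x. k3 * x) c1 x0 (fst p) (snd p)) = 0 \<and>
         \<not> (\<exists>y z. 0 < y \<and> y < z \<and>
            (\<forall>y' z'. 0 < y' \<and> y' \<le> z' \<longrightarrow>
               F0 mu sig (\<lambda>x. k3 * x) c1 x0 y z \<le> F0 mu sig (\<lambda>x. k3 * x) c1 x0 y' z'))"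
proof -
  let ?F = "\<lambda>p. F0 mu sig (\<lambda>x. k3 * x) c1 x0 (fst p) (snd p)"
  let ?S = "{(y, z). 0 < (y::real) \<and> y \<le> z}"
  define C where "C = 2 / (sig\<^sup>2 + 2 * mu)"
  have Cp: "C > 0" unfolding C_def using sig mu by (simp add: add_pos_pos)
  have pos: "\<And>p. p \<in> ?S \<Longrightarrow> ?F p > 0"
    using F0_pos[OF mu sig x0 _ _ k3 k1 c1_lb] by auto
  have ge: "0 \<le> (INF p \<in> ?S. ?F p)"
    by (rule INF_greatest) (use pos in \<open>auto intro: less_imp_le\<close>)
  obtain z L where z: "z > 0" and lim: "((\<lambda>y. c1 y z) \<longlongrightarrow> ereal L) (at_right 0)"
    using c1_lim by blast
  have "eventually (\<lambda>y. c1 y z < ereal (L+1)) (at_right 0)"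
    using lim by (rule order_tendstoD) simp
  then obtain b where b: "b > 0" and bb: "\<And>y. 0 < y \<Longrightarrow> y < b \<Longrightarrow> c1 y z < ereal (L+1)"
    unfolding eventually_at_right[OF zero_less_one] by auto
  have le: "(INF p \<in> ?S. ?F p) \<le> 0 + ereal e" if e: "e > 0" for e
  proof -
    define B where "B = max (L + 1 + k3 / mu * z) 1"
    have Bp: "B > 0" unfolding B_def by simp
    define y1 where "y1 = z * exp (- B / (e * C))"
    have y1p: "y1 > 0" unfolding y1_def using z by simp
    have "exp (- B / (e * C)) < 1" using Bp e Cp by simp
    hence y1z: "y1 < z" unfolding y1_def using z by simp
    define y where "y = min b y1 / 2"
    have y: "y > 0" "y < b" "y < y1" using b y1p unfolding y_def by auto
    have yz: "y < z" using y y1z by simp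
    define D where "D = C * (ln z - ln y)"
    have "ln y < ln y1" using y y1p by simp
    also have "ln y1 = ln z - B / (e * C)" unfolding y1_def using z by (simp add: ln_mult)
    finally have "B / (e * C) < ln z - ln y" by simp
    hence "B / e < D" unfolding D_def using Cp e by (simp add: field_simps)
    have Dp: "D > 0" using Bp e \<open>B / e < D\<close> divide_pos_pos[of B e] by linarith
    have "B < D * e" using \<open>B / e < D\<close> e by (simp add: divide_less_eq)
    hence BD: "B / D < e" using Dp by (simp add: divide_less_eq mult.commute)
    define N where "N = c1 y z + ereal (k3 / mu * (z - y))"
    have c1u: "c1 y z < ereal (L+1)" using bb y by simp
    have c1l: "ereal k1 \<le> c1 y z" using c1_lb y yz by simp
    obtain r where r: "c1 y z = ereal r" using c1u c1l by (cases "c1 y z") auto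
    have rB: "r + k3 / mu * (z - y) \<le> B"
    proof -
      have "k3 / mu * (z - y) \<le> k3 / mu * z" by (intro mult_left_mono) (use k3 mu y in auto)
      thus ?thesis using c1u r unfolding B_def by simp
    qed
    have "?F (y, z) = (ereal r + ereal (k3 / mu * (z - y))) / ereal D"
      using F0_closed[OF mu sig x0 y(1) yz, of k3 c1] r unfolding D_def C_def by (simp only: fst_conv snd_conv)
    also have "\<dots> = ereal ((r + k3 / mu * (z - y)) / D)" using Dp by simp
    also have "(r + k3 / mu * (z - y)) / D \<le> B / D" using rB Dp by (simp add: divide_right_mono)
    hence "ereal ((r + k3 / mu * (z - y)) / D) \<le> ereal e" using BD by simp
    finally have "?F (y, z) \<le> ereal e" .
    moreover have "(INF p \<in> ?S. ?F p) \<le> ?F (y, z)"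
      by (rule INF_lower) (use y yz in simp)
    ultimately show ?thesis by simp
  qed
  have inf0: "(INF p \<in> ?S. ?F p) = 0"
  proof (rule antisym)
    show "(INF p \<in> ?S. ?F p) \<le> 0" by (rule ereal_le_epsilon2[OF le])
  qed (rule ge)
  show ?thesis
  proof
    show "(INF p \<in> ?S. ?F p) = 0" by (rule inf0)
    show "\<not> (\<exists>y z. 0 < y \<and> y < z \<and>
            (\<forall>y' z'. 0 < y' \<and> y' \<le> z' \<longrightarrow>
               F0 mu sig (\<lambda>x. k3 * x) c1 x0 y z \<le> F0 mu sig (\<lambda>x. k3 * x) c1 x0 y' z'))"
    proof
      assume "\<exists>y z. 0 < y \<and> y < z \<and>
            (\<forall>y' z'. 0 < y' \<and> y' \<le> z' \<longrightarrow>
               F0 mu sig (\<lambda>x. k3 * x) c1 x0 y z \<le> F0 mu sig (\<lambda>x. k3 * x) c1 x0 y' z')"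
      then obtain y z where yz: "0 < y" "y < z" and all: "\<And>y' z'. 0 < y' \<Longrightarrow> y' \<le> z' \<Longrightarrow>
               F0 mu sig (\<lambda>x. k3 * x) c1 x0 y z \<le> F0 mu sig (\<lambda>x. k3 * x) c1 x0 y' z'" by blast
      have "?F (y, z) > 0" using pos[of "(y, z)"] yz by simp
      hence "(INF p \<in> ?S. ?F p) < ?F (y, z)" using inf0 by simp
      then obtain p where p: "p \<in> ?S" "?F p < ?F (y, z)" unfolding INF_less_iff by blast
      have "0 < fst p" "fst p \<le> snd p" using p(1) by auto
      hence "?F (y, z) \<le> ?F p" using all[of "fst p" "snd p"] by simp
      thus False using p(2) by simp
    qed
  qed
qed

end
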